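(* Let $y\in\mathbb Y$ be such that the Riccati equations with parameter $y$ have a global solution $(\Phi_y,\Psi_y)$, and let $(h,x)\in C^1(\mathbb R_+)\times\mathbb X$ satisfy $h(0)=\ell+\langle\lambda,x\rangle$. Then the equation $h=\mathcal H_y(\theta,x)$, where $$\mathcal H_y(\theta,x)(\tau)=\ell-\int_0^\tau\theta(s)\langle\Psi_y'(\tau-s),e_1\rangle ds-\Phi_y'(\tau)-\langle\Psi_y'(\tau),x\rangle,\quad\tau\ge0,$$ has a unique solution $\theta\in C(\mathbb R_+)$ (denoted $\mathcal C_y(h,x)$).
   Context: $\mathbb X=\mathbb R_+^{d_1}\times\mathbb R^{d_2}$ (up to permutation of coordinates), $d=d_1+d_2\ge1$, $e_1$ the first canonical basis vector, $\langle\cdot,\cdot\rangle$ the Euclidean inner product. For a parameter $y$: symmetric positive semidefinite $a_y,\alpha_y^1,\dots,\alpha_y^d\in\mathbb R^{d\times d}$ and $b_y,\beta_y^1,\dots,\beta_y^d\in\mathbb R^d$. Fix $\ell\in\mathbb R$ and $\lambda\in\mathbb R^d$ with $\langle\lambda,e_1\rangle\neq0$. With $F_y(u)=\tfrac12\langle u,a_yu\rangle+\langle u,b_y\rangle$, $R_y^i(u)=\tfrac12\langle u,\alpha_y^iu\rangle+\langle u,\beta_y^i\rangle$, the Riccati equations are $\Phi_y'=F_y\circ\Psi_y$, $\Phi_y(0)=0$, $\Psi_y'=R_y\circ\Psi_y-\lambda$, $\Psi_y(0)=0$. *)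

theory Defs
  imports "HOL-Analysis.Analysis"
begin

text \<open>Dimension d is the cardinality of the finite index type 'n; vectors are real^'n.\<close>

definition psd_sym :: "real^'n^'n \<Rightarrow> bool" where
  "psd_sym A \<longleftrightarrow> transpose A = A \<and> (\<forall>v. v \<bullet> (A *v v) \<ge> 0)"

text \<open>State space X = R_+^{d1} x R^{d2} up to permutation: the coordinates in I are nonnegative.\<close>
definition state_space :: "'n set \<Rightarrow> (real^'n) set" where
  "state_space I = {x. \<forall>i\<in>I. x $ i \<ge> 0}"

definition ricF :: "real^'n^'n \<Rightarrow> real^'n \<Rightarrow> real^'n \<Rightarrow> real" where
  "ricF a b u = (1/2) * (u \<bullet> (a *v u)) + u \<bullet> b"

definition ricR :: "('n \<Rightarrow> real^'n^'n) \<Rightarrow> ('n \<Rightarrow> real^'n) \<Rightarrow> real^'n \<Rightarrow> real^'n" where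
  "ricR alpha beta u = (\<chi> i. (1/2) * (u \<bullet> (alpha i *v u)) + u \<bullet> beta i)"

definition riccati_global_solution ::
  "real^'n^'n \<Rightarrow> real^'n \<Rightarrow> ('n \<Rightarrow> real^'n^'n) \<Rightarrow> ('n \<Rightarrow> real^'n) \<Rightarrow> real^'n
   \<Rightarrow> (real \<Rightarrow> real) \<Rightarrow> (real \<Rightarrow> real^'n) \<Rightarrow> bool" where
  "riccati_global_solution a b alpha beta lam Phi Psi \<longleftrightarrow>
     Phi 0 = 0 \<and> Psi 0 = 0 \<and>
     (\<forall>t\<ge>0. (Phi has_real_derivative ricF a b (Psi t)) (at t within {0..})) \<and>
     (\<forall>t\<ge>0. (Psi has_vector_derivative (ricR alpha beta (Psi t) - lam)) (at t within {0..}))"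

definition C1_nonneg :: "(real \<Rightarrow> real) \<Rightarrow> bool" where
  "C1_nonneg h \<longleftrightarrow> (\<exists>h'. continuous_on {0..} h' \<and>
      (\<forall>t\<ge>0. (h has_real_derivative h' t) (at t within {0..})))"

text \<open>The operator H_y(theta,x)(tau); Phi' and Psi' are written via the Riccati right-hand sides.\<close>
definition opH ::
  "real^'n^'n \<Rightarrow> real^'n \<Rightarrow> ('n \<Rightarrow> real^'n^'n) \<Rightarrow> ('n \<Rightarrow> real^'n) \<Rightarrow> real^'n \<Rightarrow> real
   \<Rightarrow> 'n \<Rightarrow> (real \<Rightarrow> real^'n) \<Rightarrow> (real \<Rightarrow> real) \<Rightarrow> real^'n \<Rightarrow> real \<Rightarrow> real" where
  "opH a b alpha beta lam l k Psi theta x tau =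
     l - integral {0..tau} (\<lambda>s. theta s * ((ricR alpha beta (Psi (tau - s)) - lam) \<bullet> axis k 1))
       - ricF a b (Psi tau) - (ricR alpha beta (Psi tau) - lam) \<bullet> x"

end

theory Submission
  imports Defs
begin

lemma exp_has_integral:
  fixes bt a b :: real
  assumes "bt \<noteq> 0" "a \<le> b"
  shows "((\<lambda>s. exp (bt* s)) has_integral (exp (bt*b) - exp (bt*a))/bt) {a..b}"
proof -
  have "((\<lambda>s. exp (bt* s)) has_integral (exp (bt*b)/bt - exp (bt*a)/bt)) {a..b}"
  proof (rule fundamental_theorem_of_calculus[OF assms(2)])
    fix x assume "x \<in> {a..b}"
    have "((\<lambda>s. exp (bt* s)/bt) has_real_derivative exp (bt*x)) (at x within {a..b})"
      using assms(1) by (auto intro!: derivative_eq_intros)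
    then show "((\<lambda>s. exp (bt* s)/bt) has_vector_derivative exp (bt*x)) (at x within {a..b})"
      by (simp add: has_real_derivative_iff_has_vector_derivative)
  qed
  then show ?thesis by (simp add: diff_divide_distrib)
qed

lemma gronwall0:
  fixes D :: "real \<Rightarrow> real"
  assumes cont: "continuous_on {0..T} D" and C: "0 \<le> C"
    and le: "\<And>t. t \<in> {0..T} \<Longrightarrow> \<bar>D t\<bar> \<le> C * integral {0..t} (\<lambda>s. \<bar>D s\<bar>)"
    and t: "t \<in> {0..T}"
  shows "D t = 0"
proof -
  define bt where "bt = 2*C+1"
  have bpos: "bt > 0" using C by (simp add: bt_def)
  define w where "w s = exp (-bt* s) * \<bar>D s\<bar>" for s
  have wc: "continuous_on {0..T} w" unfolding w_def
    by (intro continuous_intros cont)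
  have ne: "{0..T} \<noteq> {}" using t by auto
  obtain t0 where t0: "t0 \<in> {0..T}" and t0max: "\<And>y. y \<in> {0..T} \<Longrightarrow> w y \<le> w t0"
    using continuous_attains_sup[OF compact_Icc ne wc] by blast
  define W where "W = w t0"
  have W0: "W \<ge> 0" by (simp add: W_def w_def)
  have bndD: "\<bar>D s\<bar> \<le> W * exp (bt* s)" if "s \<in> {0..t0}" for s
  proof -
    have "w s \<le> W" using that t0 t0max W_def by auto
    then have "exp (bt* s) * w s \<le> exp (bt* s) * W" by (simp add: mult_left_mono)
    moreover have "exp (bt* s) * w s = \<bar>D s\<bar>"
      by (simp add: w_def mult.assoc[symmetric] exp_add[symmetric])
    ultimately show ?thesis by (metis mult.commute)
  qed
  have contD0: "continuous_on {0..t0} D" using cont t0 by (auto intro: continuous_on_subset)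
  have int1: "(\<lambda>s. \<bar>D s\<bar>) integrable_on {0..t0}"
    by (intro integrable_continuous_real continuous_intros contD0)
  have hi: "((\<lambda>s. W * exp (bt* s)) has_integral W * ((exp (bt*t0) - exp (bt*0))/bt)) {0..t0}"
    using t0 bpos by (intro has_integral_mult_right exp_has_integral) auto
  have "integral {0..t0} (\<lambda>s. \<bar>D s\<bar>) \<le> W * ((exp (bt*t0) - 1)/bt)"
    using has_integral_le[OF integrable_integral[OF int1] hi] bndD by auto
  also have "\<dots> \<le> W * (exp (bt*t0)/bt)"
    using W0 bpos by (intro mult_left_mono) (auto simp: divide_right_mono)
  finally have I: "integral {0..t0} (\<lambda>s. \<bar>D s\<bar>) \<le> W * (exp (bt*t0)/bt)" .
  have "\<bar>D t0\<bar> \<le> C * (W * (exp (bt*t0)/bt))"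
    using le[OF t0] mult_left_mono[OF I C] by linarith
  then have "exp (-bt*t0) * \<bar>D t0\<bar> \<le> exp (-bt*t0) * (C * (W * (exp (bt*t0)/bt)))"
    by (rule mult_left_mono) simp
  also have "\<dots> = C * W / bt"
    by (simp add: field_simps exp_minus)
  finally have "W \<le> C * W / bt" by (simp add: W_def w_def)
  moreover have "C * W / bt \<le> W / 2"
    using W0 bpos C by (simp add: bt_def field_simps mult_right_mono)
  ultimately have "W = 0" using W0 by linarith
  then have "w t \<le> 0" using t0max[OF t] W_def by simp
  then show ?thesis by (simp add: w_def mult_le_0_iff)
qed

definition conv :: "(real \<Rightarrow> real) \<Rightarrow> (real \<Rightarrow> real) \<Rightarrow> real \<Rightarrow> real" where
  "conv u K t = integral {0..t} (\<lambda>s. u s * K (t - s))"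

lemma cont_shift:
  fixes K :: "real \<Rightarrow> real" and t T :: real
  assumes "continuous_on {0..T} K" "t \<le> T"
  shows "continuous_on {0..t} (\<lambda>s. K (t - s))"
proof -
  have "continuous_on {0..t} (\<lambda>s. t - s)" by (intro continuous_intros)
  moreover have "(\<lambda>s. t - s) ` {0..t} \<subseteq> {0..T}" using assms(2) by auto
  ultimately show ?thesis using continuous_on_compose2[OF assms(1)] by blast
qed

lemma cont_bound:
  fixes K :: "real \<Rightarrow> real"
  assumes "continuous_on {a..b} K"
  obtains M where "M > 0" "\<And>r. r \<in> {a..b} \<Longrightarrow> \<bar>K r\<bar> \<le> M"
proof -
  have "bounded (K ` {a..b})"
    by (rule compact_imp_bounded[OF compact_continuous_image[OF assms compact_Icc]])
  then obtain M where "M > 0" "\<And>x. x \<in> K ` {a..b} \<Longrightarrow> norm x \<le> M"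
    by (auto simp: bounded_pos)
  then show ?thesis using that by auto
qed

lemma volterra_unique:
  fixes u K :: "real \<Rightarrow> real"
  assumes c: "c \<noteq> 0" and K: "continuous_on {0..T} K" and u: "continuous_on {0..T} u"
    and eq: "\<And>t. t \<in> {0..T} \<Longrightarrow> c * u t + conv u K t = 0"
    and t: "t \<in> {0..T}"
  shows "u t = 0"
proof -
  obtain M where M: "M > 0" "\<And>r. r \<in> {0..T} \<Longrightarrow> \<bar>K r\<bar> \<le> M"
    using cont_bound[OF K] by blast
  show ?thesis
  proof (rule gronwall0[OF u _ _ t])
    show "0 \<le> M / \<bar>c\<bar>" using M by simp
    fix t assume t: "t \<in> {0..T}"
    have ut: "continuous_on {0..t} u" using u t by (auto intro: continuous_on_subset)
    have Kt: "continuous_on {0..t} (\<lambda>s. K (t - s))" using cont_shift[OF K] t by auto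
    have "norm (integral {0..t} (\<lambda>s. u s * K (t - s))) \<le> integral {0..t} (\<lambda>s. M * \<bar>u s\<bar>)"
    proof (rule integral_norm_bound_integral)
      show "(\<lambda>s. u s * K (t - s)) integrable_on {0..t}"
        by (intro integrable_continuous_real continuous_intros ut Kt)
      show "(\<lambda>s. M * \<bar>u s\<bar>) integrable_on {0..t}"
        by (intro integrable_continuous_real continuous_intros ut)
      fix s assume s: "s \<in> {0..t}"
      have "\<bar>K (t - s)\<bar> \<le> M" using M(2)[of "t-s"] s t by auto
      then show "norm (u s * K (t - s)) \<le> M * \<bar>u s\<bar>"
        by (simp add: abs_mult) (metis abs_ge_zero mult.commute mult_right_mono)
    qed
    also have "\<dots> = M * integral {0..t} (\<lambda>s. \<bar>u s\<bar>)" by simp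
    finally have "\<bar>conv u K t\<bar> \<le> M * integral {0..t} (\<lambda>s. \<bar>u s\<bar>)"
      by (simp add: conv_def)
    moreover have "\<bar>c\<bar> * \<bar>u t\<bar> = \<bar>conv u K t\<bar>"
      using eq[OF t] by (metis abs_minus_cancel abs_mult add_eq_0_iff)
    ultimately have "\<bar>c\<bar> * \<bar>u t\<bar> \<le> M * integral {0..t} (\<lambda>s. \<bar>u s\<bar>)" by simp
    then show "\<bar>u t\<bar> \<le> M / \<bar>c\<bar> * integral {0..t} (\<lambda>s. \<bar>u s\<bar>)"
      using c by (simp add: field_simps)
  qed
qed

lemma ext_deriv:
  fixes G G' :: "real \<Rightarrow> real"
  assumes GD: "\<And>t. t \<ge> 0 \<Longrightarrow> (G has_real_derivative G' t) (at t within {0..})"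
  shows "((\<lambda>r. if 0 \<le> r then G r else G 0 + G' 0 * r) has_real_derivative G' (max 0 r)) (at r)"
proof -
  let ?Gt = "\<lambda>r. if 0 \<le> r then G r else G 0 + G' 0 * r"
  consider "r > 0" | "r < 0" | "r = 0" by linarith
  then show ?thesis
  proof cases
    case 1
    have "(G has_real_derivative G' r) (at r)"
      using GD[of r] 1 at_within_interior[of r "{0..}"] by auto
    then have "(?Gt has_real_derivative G' r) (at r)"
      by (rule has_field_derivative_transform_within_open[where S="{0<..}"]) (use 1 in auto)
    then show ?thesis using 1 by simp
  next
    case 2
    have "((\<lambda>r. G 0 + G' 0 * r) has_real_derivative G' 0) (at r)"
      by (auto intro!: derivative_eq_intros)
    then have "(?Gt has_real_derivative G' 0) (at r)"
      by (rule has_field_derivative_transform_within_open[where S="{..<0}"]) (use 2 in auto)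
    then show ?thesis using 2 by simp
  next
    case 3
    have R: "((\<lambda>y. (G y - G 0) / (y - 0)) \<longlongrightarrow> G' 0) (at_right 0)"
    proof -
      have "(G has_real_derivative G' 0) (at 0 within {0<..})"
        by (rule has_field_derivative_subset[OF GD]) auto
      then show ?thesis by (simp add: has_field_derivative_iff)
    qed
    have R': "((\<lambda>y. (?Gt y - ?Gt 0) / (y - 0)) \<longlongrightarrow> G' 0) (at_right 0)"
      by (rule Lim_transform_eventually[OF R]) (auto simp: eventually_at_right_less eventually_at_right_field intro: exI[of _ 1])
    have L': "((\<lambda>y. (?Gt y - ?Gt 0) / (y - 0)) \<longlongrightarrow> G' 0) (at_left 0)"
    proof (rule Lim_transform_eventually[OF tendsto_const])
      show "\<forall>\<^sub>F y in at_left 0. G' 0 = (?Gt y - ?Gt 0) / (y - 0)"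
        unfolding eventually_at_left_field by (auto intro!: exI[of _ "-1"])
    qed
    have "((\<lambda>y. (?Gt y - ?Gt 0) / (y - 0)) \<longlongrightarrow> G' 0) (at 0)"
      by (rule filterlim_split_at[OF L' R'])
    then have "(?Gt has_real_derivative G' 0) (at 0)"
      by (simp add: has_field_derivative_iff)
    then show ?thesis using 3 by simp
  qed
qed

lemma conv_split:
  fixes u G Gt E :: "real \<Rightarrow> real"
  assumes u: "continuous_on {0..T} u" and Gt: "continuous_on {-T..T} Gt"
    and sig: "\<sigma> \<in> {0..T}"
    and GG: "\<And>r. r \<in> {0..T} \<Longrightarrow> Gt r = G r" and GE: "\<And>r. r \<le> 0 \<Longrightarrow> Gt r = E r"
  shows "conv u G \<sigma> = integral {0..T} (\<lambda>s. u s * Gt (\<sigma> - s)) - integral {\<sigma>..T} (\<lambda>s. u s * E (\<sigma> - s))"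
proof -
  have c1: "continuous_on {0..T} (\<lambda>s. \<sigma> - s)" by (intro continuous_intros)
  have "(\<lambda>s. \<sigma> - s) ` {0..T} \<subseteq> {-T..T}" using sig by auto
  then have "continuous_on {0..T} (\<lambda>s. Gt (\<sigma> - s))"
    using continuous_on_compose2[OF Gt c1] by blast
  then have int: "(\<lambda>s. u s * Gt (\<sigma> - s)) integrable_on {0..T}"
    by (intro integrable_continuous_real continuous_intros u)
  have "integral {0..T} (\<lambda>s. u s * Gt (\<sigma> - s)) =
        integral {0..\<sigma>} (\<lambda>s. u s * Gt (\<sigma> - s)) + integral {\<sigma>..T} (\<lambda>s. u s * Gt (\<sigma> - s))"
    using Henstock_Kurzweil_Integration.integral_combine[OF _ _ int, of \<sigma>] sig by auto
  also have "integral {0..\<sigma>} (\<lambda>s. u s * Gt (\<sigma> - s)) = conv u G \<sigma>"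
    unfolding conv_def by (rule integral_cong) (use sig GG in auto)
  also have "integral {\<sigma>..T} (\<lambda>s. u s * Gt (\<sigma> - s)) = integral {\<sigma>..T} (\<lambda>s. u s * E (\<sigma> - s))"
    by (rule integral_cong) (use GE in auto)
  finally show ?thesis by simp
qed

lemma conv_continuous:
  fixes u K :: "real \<Rightarrow> real"
  assumes u: "continuous_on {0..T} u" and K: "continuous_on {0..T} K"
  shows "continuous_on {0..T} (conv u K)"
proof -
  define Kt where "Kt r = K (max 0 r)" for r
  have Kt: "continuous_on {-T..T} Kt"
  proof -
    have "continuous_on {-T..T} (\<lambda>r. max 0 r)" by (intro continuous_intros)
    moreover have "(\<lambda>r. max 0 r) ` {-T..T} \<subseteq> {0..T}" by auto
    ultimately show ?thesis unfolding Kt_def using continuous_on_compose2[OF K] by blast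
  qed
  have eq: "conv u K \<sigma> = integral {0..T} (\<lambda>s. u s * Kt (\<sigma> - s)) - integral {\<sigma>..T} (\<lambda>s. u s * K 0)"
    if "\<sigma> \<in> {0..T}" for \<sigma>
    by (rule conv_split[OF u Kt that]) (auto simp: Kt_def)
  have c1: "continuous_on {0..T} (\<lambda>\<sigma>. integral (cbox 0 T) (\<lambda>s. u s * Kt (\<sigma> - s)))"
  proof (rule integral_continuous_on_param)
    have a: "continuous_on ({0..T} \<times> cbox 0 T) (\<lambda>x. u (snd x))"
      by (rule continuous_on_compose2[OF u continuous_on_snd]) auto
    have b0: "continuous_on ({0..T} \<times> cbox 0 T) (\<lambda>x. fst x - snd x)"
      by (intro continuous_intros)
    have b: "continuous_on ({0..T} \<times> cbox 0 T) (\<lambda>x. Kt (fst x - snd x))"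
      by (rule continuous_on_compose2[OF Kt b0]) auto
    show "continuous_on ({0..T} \<times> cbox 0 T) (\<lambda>(\<sigma>, s). u s * Kt (\<sigma> - s))"
      using continuous_on_mult[OF a b] by (simp add: case_prod_beta' mult.commute)
  qed
  have c2: "continuous_on {0..T} (\<lambda>\<sigma>. integral {\<sigma>..T} (\<lambda>s. u s * K 0))"
    by (intro indefinite_integral_continuous_1' integrable_continuous_real continuous_intros u)
  have "continuous_on {0..T} (\<lambda>\<sigma>. integral {0..T} (\<lambda>s. u s * Kt (\<sigma> - s)) - integral {\<sigma>..T} (\<lambda>s. u s * K 0))"
    using continuous_on_diff[OF c1 c2] by simp
  then show ?thesis by (rule continuous_on_eq) (simp add: eq)
qed

lemma conv_deriv:
  fixes \<theta> G G' :: "real \<Rightarrow> real"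
  assumes th: "continuous_on {0..T} \<theta>"
    and GD: "\<And>t. t \<ge> 0 \<Longrightarrow> (G has_real_derivative G' t) (at t within {0..})"
    and G'c: "continuous_on {0..} G'"
    and tau: "\<tau> \<in> {0..T}"
  shows "(conv \<theta> G has_real_derivative (\<theta> \<tau> * G 0 + conv \<theta> G' \<tau>)) (at \<tau> within {0..T})"
proof -
  define Gt where "Gt r = (if 0 \<le> r then G r else G 0 + G' 0 * r)" for r
  define Gt' where "Gt' r = G' (max 0 r)" for r
  have GtD: "(Gt has_real_derivative Gt' r) (at r)" for r
    unfolding Gt_def Gt'_def by (rule ext_deriv[OF GD])
  have Gt'c: "continuous_on UNIV Gt'"
  proof -
    have "continuous_on UNIV (\<lambda>r::real. max 0 r)" by (intro continuous_intros)
    moreover have "(\<lambda>r::real. max 0 r) ` UNIV \<subseteq> {0..}" by auto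
    ultimately show ?thesis unfolding Gt'_def using continuous_on_compose2[OF G'c] by blast
  qed
  have Gtc: "continuous_on S Gt" for S
    using GtD by (meson DERIV_isCont continuous_at_imp_continuous_on)
  have thT: "continuous_on (cbox 0 T) \<theta>" using th by simp
  define A where "A \<sigma> = integral {0..T} (\<lambda>s. \<theta> s * Gt (\<sigma> - s))" for \<sigma>
  define I1 where "I1 \<sigma> = integral {\<sigma>..T} \<theta>" for \<sigma>
  define I2 where "I2 \<sigma> = integral {\<sigma>..T} (\<lambda>s. s * \<theta> s)" for \<sigma>
  define B where "B \<sigma> = (G 0 + G' 0 * \<sigma>) * I1 \<sigma> - G' 0 * I2 \<sigma>" for \<sigma>
  have eq: "conv \<theta> G \<sigma> = A \<sigma> - B \<sigma>" if sig: "\<sigma> \<in> {0..T}" for \<sigma>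
  proof -
    have "conv \<theta> G \<sigma> = A \<sigma> - integral {\<sigma>..T} (\<lambda>s. \<theta> s * (G 0 + G' 0 * (\<sigma> - s)))"
      unfolding A_def by (rule conv_split[OF th Gtc sig]) (auto simp: Gt_def)
    also have "integral {\<sigma>..T} (\<lambda>s. \<theta> s * (G 0 + G' 0 * (\<sigma> - s))) = B \<sigma>"
    proof -
      have thS: "continuous_on {\<sigma>..T} \<theta>" using th sig by (auto intro: continuous_on_subset)
      have i1: "(\<lambda>s. (G 0 + G' 0 * \<sigma>) * \<theta> s) integrable_on {\<sigma>..T}"
        by (intro integrable_continuous_real continuous_intros thS)
      have i2: "(\<lambda>s. G' 0 * (s * \<theta> s)) integrable_on {\<sigma>..T}"
        by (intro integrable_continuous_real continuous_intros thS)
      have "integral {\<sigma>..T} (\<lambda>s. \<theta> s * (G 0 + G' 0 * (\<sigma> - s))) =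
            integral {\<sigma>..T} (\<lambda>s. (G 0 + G' 0 * \<sigma>) * \<theta> s - G' 0 * (s * \<theta> s))"
        by (rule integral_cong) (simp add: algebra_simps)
      also have "\<dots> = integral {\<sigma>..T} (\<lambda>s. (G 0 + G' 0 * \<sigma>) * \<theta> s) - integral {\<sigma>..T} (\<lambda>s. G' 0 * (s * \<theta> s))"
        by (rule integral_diff[OF i1 i2])
      also have "\<dots> = B \<sigma>" by (simp add: B_def I1_def I2_def)
      finally show ?thesis .
    qed
    finally show ?thesis .
  qed
  have dA: "(A has_real_derivative integral {0..T} (\<lambda>s. \<theta> s * Gt' (\<tau> - s))) (at \<tau> within {0..T})"
  proof -
    have "((\<lambda>\<sigma>. integral (cbox 0 T) (\<lambda>s. \<theta> s * Gt (\<sigma> - s))) has_field_derivative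
           integral (cbox 0 T) (\<lambda>s. \<theta> s * Gt' (\<tau> - s))) (at \<tau> within {0..T})"
    proof (rule leibniz_rule_field_derivative)
      fix x t assume "x \<in> {0..T}" "t \<in> cbox 0 T"
      have "((\<lambda>x. x - t) has_real_derivative 1) (at x within {0..T})"
        by (auto intro!: derivative_eq_intros)
      from DERIV_chain2[OF GtD this]
      have "((\<lambda>x. Gt (x - t)) has_real_derivative Gt' (x - t)) (at x within {0..T})" by simp
      then show "((\<lambda>x. \<theta> t * Gt (x - t)) has_field_derivative \<theta> t * Gt' (x - t)) (at x within {0..T})"
        by (rule DERIV_cmult)
    next
      fix x assume "x \<in> {0..T}"
      show "(\<lambda>s. \<theta> s * Gt (x - s)) integrable_on cbox 0 T"
        by (intro integrable_continuous continuous_intros thT continuous_on_compose2[OF Gtc]) auto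
    next
      have a: "continuous_on ({0..T} \<times> cbox 0 T) (\<lambda>x. \<theta> (snd x))"
        by (rule continuous_on_compose2[OF thT continuous_on_snd]) auto
      have b0: "continuous_on ({0..T} \<times> cbox 0 T) (\<lambda>x. fst x - snd x)"
        by (intro continuous_intros)
      have b: "continuous_on ({0..T} \<times> cbox 0 T) (\<lambda>x. Gt' (fst x - snd x))"
        by (rule continuous_on_compose2[OF Gt'c b0]) auto
      show "continuous_on ({0..T} \<times> cbox 0 T) (\<lambda>(x, t). \<theta> t * Gt' (x - t))"
        using continuous_on_mult[OF a b] by (simp add: case_prod_beta')
    qed (use tau in auto)
    then show ?thesis by (simp add: A_def[abs_def])
  qed
  have thc: "continuous_on {0..T} (\<lambda>s. s * \<theta> s)" by (intro continuous_intros th)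
  have dI1: "(I1 has_real_derivative - \<theta> \<tau>) (at \<tau> within {0..T})"
    unfolding I1_def by (rule integral_has_real_derivative'[OF th tau])
  have dI2: "(I2 has_real_derivative - (\<tau> * \<theta> \<tau>)) (at \<tau> within {0..T})"
    unfolding I2_def by (rule integral_has_real_derivative'[OF thc tau])
  have dB: "(B has_real_derivative G' 0 * I1 \<tau> - G 0 * \<theta> \<tau>) (at \<tau> within {0..T})"
    unfolding B_def
    by (rule derivative_eq_intros dI1 dI2 refl | simp)+ (simp add: algebra_simps)
  have "((\<lambda>\<sigma>. A \<sigma> - B \<sigma>) has_real_derivative
          integral {0..T} (\<lambda>s. \<theta> s * Gt' (\<tau> - s)) - (G' 0 * I1 \<tau> - G 0 * \<theta> \<tau>)) (at \<tau> within {0..T})"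
    by (rule DERIV_diff[OF dA dB])
  moreover have "integral {0..T} (\<lambda>s. \<theta> s * Gt' (\<tau> - s)) - (G' 0 * I1 \<tau> - G 0 * \<theta> \<tau>) =
      \<theta> \<tau> * G 0 + conv \<theta> G' \<tau>"
  proof -
    have "conv \<theta> G' \<tau> = integral {0..T} (\<lambda>s. \<theta> s * Gt' (\<tau> - s)) - integral {\<tau>..T} (\<lambda>s. \<theta> s * G' 0)"
      by (rule conv_split[OF th continuous_on_subset[OF Gt'c] tau]) (auto simp: Gt'_def max_def)
    moreover have "integral {\<tau>..T} (\<lambda>s. \<theta> s * G' 0) = G' 0 * I1 \<tau>"
      by (simp add: I1_def mult.commute)
    ultimately show ?thesis by (simp add: I1_def)
  qed
  ultimately have "((\<lambda>\<sigma>. A \<sigma> - B \<sigma>) has_real_derivative \<theta> \<tau> * G 0 + conv \<theta> G' \<tau>) (at \<tau> within {0..T})"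
    by simp
  then show ?thesis
    by (rule has_field_derivative_transform_within[where d=1]) (use tau eq in auto)
qed

lemma conv_exp_bound:
  fixes u K :: "real \<Rightarrow> real"
  assumes g: "g > 0" and t: "0 \<le> t" and u: "continuous_on {0..t} u" and K: "continuous_on {0..t} K"
    and uD: "\<And>s. s \<in> {0..t} \<Longrightarrow> \<bar>u s\<bar> \<le> D" and KM: "\<And>r. r \<in> {0..t} \<Longrightarrow> \<bar>K r\<bar> \<le> M"
  shows "\<bar>conv u (\<lambda>r. exp (-g * r) * K r) t\<bar> \<le> D * M / g"
proof -
  have D0: "0 \<le> D" using uD[of 0] t by auto
  have M0: "0 \<le> M" using KM[of 0] t by auto
  have Kt: "continuous_on {0..t} (\<lambda>s. K (t - s))" using cont_shift[OF K] by auto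
  have hi: "((\<lambda>s. (D * M * exp (-g*t)) * exp (g * s)) has_integral
             (D * M * exp (-g*t)) * ((exp (g * t) - exp (g * 0))/g)) {0..t}"
    using g t by (intro has_integral_mult_right exp_has_integral) auto
  have "norm (integral {0..t} (\<lambda>s. u s * (exp (-g * (t - s)) * K (t - s)))) \<le>
        integral {0..t} (\<lambda>s. (D * M * exp (-g*t)) * exp (g * s))"
  proof (rule integral_norm_bound_integral)
    show "(\<lambda>s. u s * (exp (-g * (t - s)) * K (t - s))) integrable_on {0..t}"
      by (intro integrable_continuous_real continuous_intros u Kt)
    show "(\<lambda>s. (D * M * exp (-g*t)) * exp (g * s)) integrable_on {0..t}"
      using hi by blast
    fix s assume s: "s \<in> {0..t}"
    have "\<bar>u s\<bar> * \<bar>K (t - s)\<bar> \<le> D * M"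
      using uD[OF s] KM[of "t - s"] s by (intro mult_mono) auto
    then have "\<bar>u s\<bar> * \<bar>K (t - s)\<bar> * exp (-g * (t - s)) \<le> D * M * exp (-g * (t - s))"
      by (rule mult_right_mono) simp
    moreover have "exp (-g * (t - s)) = exp (-g*t) * exp (g * s)"
      by (simp add: exp_add[symmetric] algebra_simps)
    ultimately show "norm (u s * (exp (-g * (t - s)) * K (t - s))) \<le> (D * M * exp (-g*t)) * exp (g * s)"
      by (simp add: abs_mult algebra_simps)
  qed
  also have "\<dots> = (D * M * exp (-g*t)) * ((exp (g * t) - 1)/g)"
    using integral_unique[OF hi] by simp
  also have "\<dots> = D * M * (1 - exp (-g*t)) / g"
    by (simp add: field_simps exp_minus)
  also have "\<dots> \<le> D * M / g"
  proof -
    have "D * M * (1 - exp (-g*t)) \<le> D * M" by (rule mult_left_le) (use D0 M0 in auto)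
    then show ?thesis using g by (intro divide_right_mono) auto
  qed
  finally show ?thesis by (simp add: conv_def)
qed

lemma volterra_exists_T:
  fixes K u0 :: "real \<Rightarrow> real"
  assumes c: "c \<noteq> 0" and K: "continuous_on {0..T} K" and u0: "continuous_on {0..T} u0" and T: "0 \<le> T"
  shows "\<exists>u. continuous_on {0..T} u \<and> (\<forall>t\<in>{0..T}. c * u t + conv u K t = u0 t)"
proof -
  obtain M where M: "M > 0" "\<And>r. r \<in> {0..T} \<Longrightarrow> \<bar>K r\<bar> \<le> M"
    using cont_bound[OF K] by blast
  define g where "g = 2 * M / \<bar>c\<bar>"
  have g: "g > 0" using M c by (simp add: g_def)
  define k where "k r = exp (-g * r) * K r" for r
  have kc: "continuous_on {0..T} k" unfolding k_def by (intro continuous_intros K)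
  define F where "F v t = exp (-g * t) * u0 t / c - conv v k t / c" for v t
  have Fc: "continuous_on (cbox 0 T) (F (apply_bcontfun v))" for v
    unfolding F_def cbox_interval
    using c by (intro continuous_intros conv_continuous kc u0) (auto intro: continuous_on_subset)
  define \<Phi> where "\<Phi> v = (SOME w. \<forall>x. apply_bcontfun w x = F (apply_bcontfun v) (clamp 0 T x))" for v
  have \<Phi>: "apply_bcontfun (\<Phi> v) x = F (apply_bcontfun v) (clamp 0 T x)" for v x
  proof -
    obtain w :: "real \<Rightarrow>\<^sub>C real" where "\<And>x. apply_bcontfun w x = F (apply_bcontfun v) (clamp 0 T x)"
      using continuous_on_cbox_bcontfunE[OF Fc[of v]] by metis
    then have "\<exists>w. \<forall>x. apply_bcontfun w x = F (apply_bcontfun v) (clamp 0 T x)" by blast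
    then show ?thesis unfolding \<Phi>_def by (rule someI_ex[THEN spec])
  qed
  have clampT: "clamp 0 T x \<in> {0..T}" for x :: real
    using clamp_in_interval[of 0 T x] T by (simp add: cbox_interval)
  have contr: "dist (\<Phi> v) (\<Phi> w) \<le> (1/2) * dist v w" for v w
  proof (rule dist_bound)
    fix x
    define t where "t = clamp 0 T x"
    have t: "t \<in> {0..T}" using clampT t_def by auto
    have vc: "continuous_on {0..t} (apply_bcontfun v)" and wc: "continuous_on {0..t} (apply_bcontfun w)"
      by auto
    have Kt: "continuous_on {0..t} K" using K t by (auto intro: continuous_on_subset)
    have kt: "continuous_on {0..t} k" using kc t by (auto intro: continuous_on_subset)
    have "conv v k t - conv w k t = conv (\<lambda>s. v s - w s) k t"
    proof -
      have i1: "(\<lambda>s. v s * k (t - s)) integrable_on {0..t}"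
        by (intro integrable_continuous_real continuous_intros vc cont_shift[OF kt]) auto
      have i2: "(\<lambda>s. w s * k (t - s)) integrable_on {0..t}"
        by (intro integrable_continuous_real continuous_intros wc cont_shift[OF kt]) auto
      show ?thesis unfolding conv_def left_diff_distrib by (rule integral_diff[OF i1 i2, symmetric])
    qed
    moreover have "\<bar>conv (\<lambda>s. v s - w s) k t\<bar> \<le> dist v w * M / g"
      unfolding k_def
    proof (rule conv_exp_bound[OF g _ _ Kt])
      show "0 \<le> t" using t by auto
      show "continuous_on {0..t} (\<lambda>s. v s - w s)" by (intro continuous_intros vc wc)
      fix s show "\<bar>v s - w s\<bar> \<le> dist v w"
        using dist_bounded[of v s w] by (simp add: dist_real_def)
    next
      fix r assume "r \<in> {0..t}" then show "\<bar>K r\<bar> \<le> M" using M t by auto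
    qed
    ultimately have A: "\<bar>conv v k t - conv w k t\<bar> \<le> dist v w * M / g" by simp
    have e: "\<Phi> v x - \<Phi> w x = (conv w k t - conv v k t) / c"
      unfolding \<Phi> t_def[symmetric] F_def by (simp add: diff_divide_distrib)
    have "dist (\<Phi> v x) (\<Phi> w x) = \<bar>conv v k t - conv w k t\<bar> / \<bar>c\<bar>"
      unfolding dist_real_def e by (simp add: abs_minus_commute)
    also have "\<dots> \<le> dist v w * M / g / \<bar>c\<bar>"
      by (rule divide_right_mono[OF A]) simp
    also have "\<dots> = 1/2 * dist v w"
    proof -
      have gc: "g * \<bar>c\<bar> = 2 * M" using c by (simp add: g_def)
      have "dist v w * M / g / \<bar>c\<bar> = dist v w * M / (g * \<bar>c\<bar>)" by simp
      also have "\<dots> = 1/2 * dist v w" unfolding gc using M(1) by simp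
      finally show ?thesis .
    qed
    finally show "dist (\<Phi> v x) (\<Phi> w x) \<le> 1/2 * dist v w" .
  qed
  obtain v where v: "\<Phi> v = v" using banach_fix_type[of "1/2" \<Phi>] contr by auto
  define u where "u t = exp (g * t) * apply_bcontfun v t" for t
  have uc: "continuous_on {0..T} u" unfolding u_def by (intro continuous_intros) auto
  have "c * u t + conv u K t = u0 t" if t: "t \<in> {0..T}" for t
  proof -
    have ct: "clamp 0 T t = t" using clamp_cancel_cbox[of t 0 T] t by (simp add: cbox_interval)
    have vt: "apply_bcontfun v t = F (apply_bcontfun v) t"
      using \<Phi>[of v t] v ct by simp
    have cu: "conv u K t = exp (g * t) * conv (apply_bcontfun v) k t"
      unfolding conv_def integral_mult_right[symmetric]
    proof (rule integral_cong)
      fix s assume "s \<in> {0..t}"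
      have e: "exp (g * s) = exp (g * t) * exp (-g * (t - s))"
        by (simp add: exp_add[symmetric] algebra_simps)
      show "u s * K (t - s) = exp (g * t) * (apply_bcontfun v s * k (t - s))"
        unfolding u_def k_def e by (simp only: mult_ac)
    qed
    have "c * u t + conv u K t = exp (g * t) * (c * apply_bcontfun v t + conv (apply_bcontfun v) k t)"
      unfolding cu u_def by (simp only: distrib_left mult_ac)
    also have "c * apply_bcontfun v t + conv (apply_bcontfun v) k t = exp (-g * t) * u0 t"
    proof -
      have "c * apply_bcontfun v t = c * (exp (-g * t) * u0 t / c - conv (apply_bcontfun v) k t / c)"
        using vt by (simp add: F_def)
      also have "\<dots> = exp (-g * t) * u0 t - conv (apply_bcontfun v) k t"
        using c by (simp add: right_diff_distrib)
      finally show ?thesis by simp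
    qed
    also have "exp (g * t) * (exp (-g * t) * u0 t) = u0 t"
      by (simp add: mult.assoc[symmetric] exp_add[symmetric])
    finally show ?thesis .
  qed
  then show ?thesis using uc by blast
qed

lemma conv_diff:
  fixes u1 u2 K :: "real \<Rightarrow> real"
  assumes "continuous_on {0..t} u1" "continuous_on {0..t} u2" "continuous_on {0..t} K"
  shows "conv (\<lambda>s. u1 s - u2 s) K t = conv u1 K t - conv u2 K t"
proof -
  have Kt: "continuous_on {0..t} (\<lambda>s. K (t - s))" using cont_shift[OF assms(3)] by auto
  have i1: "(\<lambda>s. u1 s * K (t - s)) integrable_on {0..t}"
    by (intro integrable_continuous_real continuous_intros assms Kt)
  have i2: "(\<lambda>s. u2 s * K (t - s)) integrable_on {0..t}"
    by (intro integrable_continuous_real continuous_intros assms Kt)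
  show ?thesis unfolding conv_def left_diff_distrib by (rule integral_diff[OF i1 i2])
qed

lemma volterra_exists:
  fixes K u0 :: "real \<Rightarrow> real"
  assumes c: "c \<noteq> 0" and K: "continuous_on {0..} K" and u0: "continuous_on {0..} u0"
  shows "\<exists>u. continuous_on {0..} u \<and> (\<forall>t\<ge>0. c * u t + conv u K t = u0 t)"
proof -
  define P where "P T u \<longleftrightarrow> continuous_on {0..T} u \<and> (\<forall>t\<in>{0..T}. c * u t + conv u K t = u0 t)" for T u
  have KT: "continuous_on {0..T} K" for T using K by (rule continuous_on_subset) auto
  have ex: "\<exists>u. P T u" if "0 \<le> T" for T
    unfolding P_def
    by (rule volterra_exists_T[OF c KT _ that]) (rule continuous_on_subset[OF u0], auto)
  define sol where "sol T = (SOME u. P T u)" for T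
  have solP: "P T (sol T)" if "0 \<le> T" for T
    unfolding sol_def using ex[OF that] by (rule someI_ex)
  have uniq: "u1 t = u2 t" if P1: "P T1 u1" and P2: "P T2 u2" and t: "t \<in> {0..min T1 T2}" for T1 T2 u1 u2 t
  proof -
    define T where "T = min T1 T2"
    have c1: "continuous_on {0..T} u1" using P1 unfolding P_def T_def
      by (auto intro: continuous_on_subset)
    have c2: "continuous_on {0..T} u2" using P2 unfolding P_def T_def
      by (auto intro: continuous_on_subset)
    have "u1 t - u2 t = 0"
    proof (rule volterra_unique[OF c KT, where u="\<lambda>s. u1 s - u2 s"])
      show "continuous_on {0..T} (\<lambda>s. u1 s - u2 s)" by (intro continuous_intros c1 c2)
      show "t \<in> {0..T}" using t T_def by simp
      fix s assume s: "s \<in> {0..T}"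
      have sub: "{0..s} \<subseteq> {0..T}" using s by auto
      have "conv (\<lambda>s. u1 s - u2 s) K s = conv u1 K s - conv u2 K s"
        by (rule conv_diff) (use continuous_on_subset[OF c1 sub] continuous_on_subset[OF c2 sub] KT in auto)
      moreover have "c * u1 s + conv u1 K s = u0 s" "c * u2 s + conv u2 K s = u0 s"
        using P1 P2 s unfolding P_def T_def by auto
      ultimately show "c * (u1 s - u2 s) + conv (\<lambda>s. u1 s - u2 s) K s = 0"
        by (simp add: algebra_simps)
    qed
    then show ?thesis by simp
  qed
  define u where "u t = sol (max 0 t + 1) t" for t
  have agree: "u s = sol (t + 1) s" if "0 \<le> t" "s \<in> {0..t+1}" for s t
  proof -
    have "u s = sol (s + 1) s" using that by (simp add: u_def)
    also have "\<dots> = sol (t + 1) s"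
      by (rule uniq[OF solP solP]) (use that in auto)
    finally show ?thesis .
  qed
  have cont: "continuous_on {0..} u"
    unfolding continuous_on_eq_continuous_within
  proof
    fix t0 :: real assume "t0 \<in> {0..}"
    then have t0: "0 \<le> t0" by simp
    have "continuous_on {0..t0+1} (sol (t0+1))" using solP[of "t0+1"] t0 by (simp add: P_def)
    then have "continuous (at t0 within {0..t0+1}) (sol (t0+1))"
      using t0 by (simp add: continuous_on_eq_continuous_within)
    then have "continuous (at t0 within {0..t0+1}) u"
      by (rule continuous_transform_within[where \<delta>=1]) (use t0 agree in auto)
    moreover have "at t0 within {0..} = at t0 within {0..t0+1}"
      by (rule at_within_nhd[where S="{..<t0+1}"]) auto
    ultimately show "continuous (at t0 within {0..}) u" by simp
  qed
  have "c * u t + conv u K t = u0 t" if t: "t \<ge> 0" for t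
  proof -
    have "conv u K t = conv (sol (t+1)) K t"
      unfolding conv_def by (rule integral_cong) (use t agree in auto)
    moreover have "u t = sol (t+1) t" using agree[of t t] t by simp
    ultimately show ?thesis using solP[of "t+1"] t by (simp add: P_def)
  qed
  then show ?thesis using cont by blast
qed

lemma q_deriv:
  fixes Psi :: "real \<Rightarrow> real^'n" and A :: "real^'n^'n"
  assumes "(Psi has_vector_derivative P) (at t within S)"
  shows "((\<lambda>t. (1/2) * (Psi t \<bullet> (A *v Psi t)) + Psi t \<bullet> b) has_real_derivative
           (1/2) * (P \<bullet> (A *v Psi t) + Psi t \<bullet> (A *v P)) + P \<bullet> b) (at t within S)"
proof -
  have d: "(Psi has_derivative (\<lambda>h. h *\<^sub>R P)) (at t within S)"
    using assms by (simp add: has_vector_derivative_def)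
  have dA: "((\<lambda>t. A *v Psi t) has_derivative (\<lambda>h. A *v (h *\<^sub>R P))) (at t within S)"
    by (rule bounded_linear.has_derivative[OF matrix_vector_mul_bounded_linear d])
  have di: "((\<lambda>t. Psi t \<bullet> (A *v Psi t)) has_derivative
       (\<lambda>h. Psi t \<bullet> (A *v (h *\<^sub>R P)) + (h *\<^sub>R P) \<bullet> (A *v Psi t))) (at t within S)"
    by (rule has_derivative_inner[OF d dA])
  have db: "((\<lambda>t. Psi t \<bullet> b) has_derivative (\<lambda>h. (h *\<^sub>R P) \<bullet> b)) (at t within S)"
    by (rule has_derivative_inner_left[OF d])
  have "((\<lambda>t. (1/2) * (Psi t \<bullet> (A *v Psi t)) + Psi t \<bullet> b) has_derivative
      (\<lambda>h. (1/2) * (Psi t \<bullet> (A *v (h *\<^sub>R P)) + (h *\<^sub>R P) \<bullet> (A *v Psi t)) + (h *\<^sub>R P) \<bullet> b)) (at t within S)"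
    by (intro has_derivative_add has_derivative_mult_right di db)
  then show ?thesis unfolding has_field_derivative_def
    by (rule has_derivative_eq_rhs)
       (auto simp: fun_eq_iff matrix_vector_mult_scaleR algebra_simps)
qed

lemma mv_cont[continuous_intros]:
  fixes f :: "real \<Rightarrow> real^'n" and A :: "real^'n^'n"
  shows "continuous_on S f \<Longrightarrow> continuous_on S (\<lambda>t. A *v f t)"
  by (rule linear_continuous_on_compose[OF _ matrix_vector_mul_linear])

theorem mainTheorem6:
  fixes a :: "real^'n^'n" and b :: "real^'n"
    and alpha :: "'n \<Rightarrow> real^'n^'n" and beta :: "'n \<Rightarrow> real^'n"
    and lam x :: "real^'n" and l :: real and k :: 'n and I :: "'n set"
    and Phi h :: "real \<Rightarrow> real" and Psi :: "real \<Rightarrow> real^'n"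
  assumes "psd_sym a" and "\<forall>i. psd_sym (alpha i)"
    and "lam \<bullet> axis k 1 \<noteq> 0"
    and "riccati_global_solution a b alpha beta lam Phi Psi"
    and "C1_nonneg h" and "x \<in> state_space I"
    and "h 0 = l + lam \<bullet> x"
  shows "\<exists>theta. continuous_on {0..} theta
           \<and> (\<forall>tau\<ge>0. h tau = opH a b alpha beta lam l k Psi theta x tau)
           \<and> (\<forall>theta'. continuous_on {0..} theta'
                 \<and> (\<forall>tau\<ge>0. h tau = opH a b alpha beta lam l k Psi theta' x tau)
                 \<longrightarrow> (\<forall>t\<ge>0. theta' t = theta t))"
proof -
  have Psi0: "Psi 0 = 0"
    and PsiD0: "\<And>t. t \<ge> 0 \<Longrightarrow> (Psi has_vector_derivative (ricR alpha beta (Psi t) - lam)) (at t within {0..})"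
    using assms(4) unfolding riccati_global_solution_def by auto
  obtain h' where h'c: "continuous_on {0..} h'"
    and hD: "\<And>t. t \<ge> 0 \<Longrightarrow> (h has_real_derivative h' t) (at t within {0..})"
    using assms(5) unfolding C1_nonneg_def by auto
  define P where "P t = ricR alpha beta (Psi t) - lam" for t
  have PD: "(Psi has_vector_derivative P t) (at t within {0..})" if "t \<ge> 0" for t
    using PsiD0[OF that] by (simp add: P_def)
  have Psic: "continuous_on {0..} Psi"
    unfolding continuous_on_eq_continuous_within
    using PD by (auto intro: has_vector_derivative_continuous)
  have Pcomp: "P t $ i = (1/2) * (Psi t \<bullet> (alpha i *v Psi t)) + Psi t \<bullet> beta i - lam $ i" for t i
    by (simp add: P_def ricR_def)
  have Pc: "continuous_on {0..} P"
    unfolding P_def ricR_def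
    by (intro continuous_intros continuous_on_vec_lambda Psic)
  define dq where "dq A bb t = (1/2) * (P t \<bullet> (A *v Psi t) + Psi t \<bullet> (A *v P t)) + P t \<bullet> bb" for A bb t
  have dqD: "((\<lambda>t. (1/2) * (Psi t \<bullet> (A *v Psi t)) + Psi t \<bullet> bb) has_real_derivative dq A bb t) (at t within {0..})"
    if "t \<ge> 0" for A bb t
    unfolding dq_def by (rule q_deriv[OF PD[OF that]])
  have dqc: "continuous_on {0..} (dq A bb)" for A bb
    unfolding dq_def[abs_def] by (intro continuous_intros Pc Psic)
  define gk where "gk t = P t $ k" for t
  define g' where "g' = dq (alpha k) (beta k)"
  have gkD: "(gk has_real_derivative g' t) (at t within {0..})" if "t \<ge> 0" for t
  proof -
    have "((\<lambda>t. (1/2) * (Psi t \<bullet> (alpha k *v Psi t)) + Psi t \<bullet> beta k - lam $ k) has_real_derivative g' t - 0) (at t within {0..})"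
      unfolding g'_def by (intro DERIV_diff dqD that DERIV_const)
    then show ?thesis by (simp add: gk_def[abs_def] Pcomp)
  qed
  have g'c: "continuous_on {0..} g'" unfolding g'_def by (rule dqc)
  have gkc: "continuous_on {0..} gk"
    unfolding continuous_on_eq_continuous_within
    using gkD by (auto intro: DERIV_continuous)
  have g0: "gk 0 \<noteq> 0"
  proof -
    have "ricR alpha beta 0 = (0::real^'n)" by (simp add: ricR_def vec_eq_iff)
    then have "gk 0 = - (lam $ k)" by (simp add: gk_def P_def Psi0)
    moreover have "lam $ k \<noteq> 0" using assms(3) by (simp add: cart_eq_inner_axis)
    ultimately show ?thesis by simp
  qed
  define f where "f t = l - ricF a b (Psi t) - P t \<bullet> x - h t" for t
  define f' where "f' t = - dq a b t - (\<Sum>i\<in>UNIV. dq (alpha i) (beta i) t * x $ i) - h' t" for t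
  have fD: "(f has_real_derivative f' t) (at t within {0..})" if t: "t \<ge> 0" for t
  proof -
    have Px: "P t \<bullet> x = (\<Sum>i\<in>UNIV. ((1/2) * (Psi t \<bullet> (alpha i *v Psi t)) + Psi t \<bullet> beta i - lam $ i) * x $ i)"
      for t by (simp add: inner_vec_def Pcomp)
    have "((\<lambda>t. l - ((1/2) * (Psi t \<bullet> (a *v Psi t)) + Psi t \<bullet> b)
          - (\<Sum>i\<in>UNIV. ((1/2) * (Psi t \<bullet> (alpha i *v Psi t)) + Psi t \<bullet> beta i - lam $ i) * x $ i) - h t)
         has_real_derivative (0 - dq a b t - (\<Sum>i\<in>UNIV. (dq (alpha i) (beta i) t - 0) * x $ i) - h' t)) (at t within {0..})"
      by (intro DERIV_diff DERIV_const dqD t DERIV_sum DERIV_cmult_right hD)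
    then show ?thesis by (simp add: f_def[abs_def] f'_def ricF_def Px)
  qed
  have f'c: "continuous_on {0..} f'"
    unfolding f'_def[abs_def] by (intro continuous_intros dqc h'c)
  have f0: "f 0 = 0"
  proof -
    have "ricR alpha beta 0 = (0::real^'n)" by (simp add: ricR_def vec_eq_iff)
    then show ?thesis using assms(7) by (simp add: f_def P_def Psi0 ricF_def)
  qed
  have opH_iff: "h tau = opH a b alpha beta lam l k Psi th x tau \<longleftrightarrow> conv th gk tau = f tau" for th tau
  proof -
    have "opH a b alpha beta lam l k Psi th x tau = l - conv th gk tau - ricF a b (Psi tau) - P tau \<bullet> x"
      by (simp add: opH_def conv_def gk_def P_def cart_eq_inner_axis)
    then show ?thesis by (auto simp: f_def)
  qed
  obtain th where thc: "continuous_on {0..} th"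
    and theq: "\<And>t. t \<ge> 0 \<Longrightarrow> gk 0 * th t + conv th g' t = f' t"
    using volterra_exists[OF g0 g'c f'c] by blast
  have sol: "conv th gk tau = f tau" if tau: "tau \<ge> 0" for tau
  proof -
    define E where "E s = conv th gk s - f s" for s
    have "((\<lambda>_. 0::real) has_integral E tau - E 0) {0..tau}"
    proof (rule fundamental_theorem_of_calculus)
      show "0 \<le> tau" by fact
      fix s assume s: "s \<in> {0..tau}"
      have thT: "continuous_on {0..tau} th" using thc by (rule continuous_on_subset) auto
      have d1: "(conv th gk has_real_derivative th s * gk 0 + conv th g' s) (at s within {0..tau})"
        by (rule conv_deriv[OF thT gkD g'c s])
      have d2: "(f has_real_derivative f' s) (at s within {0..tau})"
        using fD[of s] s by (auto intro: has_field_derivative_subset)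
      have "(E has_real_derivative (th s * gk 0 + conv th g' s) - f' s) (at s within {0..tau})"
        unfolding E_def[abs_def] by (rule DERIV_diff[OF d1 d2])
      moreover have "(th s * gk 0 + conv th g' s) - f' s = 0"
        using theq[of s] s by (simp add: mult.commute)
      ultimately show "(E has_vector_derivative 0) (at s within {0..tau})"
        by (simp add: has_real_derivative_iff_has_vector_derivative)
    qed
    then have "E tau - E 0 = 0" using has_integral_unique[OF _ has_integral_0] by blast
    moreover have "E 0 = 0" by (simp add: E_def f0 conv_def)
    ultimately show ?thesis by (simp add: E_def)
  qed
  have uniq: "th2 t = th t" if th2c: "continuous_on {0..} th2" and th2: "\<And>tau. tau \<ge> 0 \<Longrightarrow> conv th2 gk tau = f tau"
    and t: "t \<ge> 0" for th2 t
  proof -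
    define d where "d s = th2 s - th s" for s
    define T where "T = t + 1"
    have T: "0 < T" using t by (simp add: T_def)
    have dc: "continuous_on {0..T} d" unfolding d_def[abs_def]
      by (intro continuous_intros continuous_on_subset[OF thc] continuous_on_subset[OF th2c]) auto
    have cz: "conv d gk s = 0" if "s \<in> {0..T}" for s
    proof -
      have "conv d gk s = conv th2 gk s - conv th gk s"
        unfolding d_def[abs_def]
        by (rule conv_diff) (use that in \<open>auto intro: continuous_on_subset[OF thc] continuous_on_subset[OF th2c] continuous_on_subset[OF gkc]\<close>)
      then show ?thesis using th2[of s] sol[of s] that by simp
    qed
    have "d t = 0"
    proof (rule volterra_unique[OF g0 continuous_on_subset[OF g'c] dc])
      show "{0..T} \<subseteq> {0..}" by auto
      show "t \<in> {0..T}" using t by (simp add: T_def)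
      fix s assume s: "s \<in> {0..T}"
      have d1: "(conv d gk has_real_derivative d s * gk 0 + conv d g' s) (at s within {0..T})"
        by (rule conv_deriv[OF dc gkD g'c s])
      have d2: "(conv d gk has_real_derivative 0) (at s within {0..T})"
        by (rule has_field_derivative_transform_within[OF DERIV_const[of 0] zero_less_one s])
           (use cz in auto)
      have "d s * gk 0 + conv d g' s = 0"
        using vector_derivative_unique_within_closed_interval[OF T, of s "conv d gk"]
          d1 d2 s by (simp add: has_real_derivative_iff_has_vector_derivative cbox_interval)
      then show "gk 0 * d s + conv d g' s = 0" by (simp add: mult.commute)
    qed
    then show ?thesis by (simp add: d_def)
  qed
  show ?thesis
  proof (intro exI[of _ th] conjI allI impI)
    show "continuous_on {0..} th" by fact
  next
    fix tau :: real assume "tau \<ge> 0"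
    then show "h tau = opH a b alpha beta lam l k Psi th x tau" using sol opH_iff by blast
  next
    fix th2 and t :: real assume H: "continuous_on {0..} th2 \<and> (\<forall>tau\<ge>0. h tau = opH a b alpha beta lam l k Psi th2 x tau)"
      and t: "0 \<le> t"
    show "th2 t = th t"
      by (rule uniq) (use H t opH_iff in auto)
  qed
qed

end
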